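(* Fix integers $c\ge2$, $k\ge2$. Let $P$ be the RAM program that, on a dataset $x$ with $n=|x|$, performs independent biased coin flips where flip number $i+1$ ($i=0,1,2,\dots$) succeeds with probability $\frac{1}{(\max\{n-i,0\}+k)^c}$, stops at the first success, and outputs the number $\hat y$ of unsuccessful flips preceding it. Then $$\Pr\Big[\hat y<\frac n2\Big]\le O\!\left(\frac{1}{n^{c-1}}\right).$$
   Context: $n=|x|$ is the number of records in the input dataset, which the RAM program can read directly. *)

theory Defs
  imports "HOL-Analysis.Analysis" "HOL-Library.Landau_Symbols"
begin

text \<open>Success probability of flip number i+1 (i = 0,1,2,...) on a dataset of size n:
  1 / (max{n-i,0} + k)^c.  Natural-number subtraction n - i is exactly max{n-i,0}.\<close>
definition flip_succ_prob :: "nat \<Rightarrow> nat \<Rightarrow> nat \<Rightarrow> nat \<Rightarrow> real" where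
  "flip_succ_prob c k n i = 1 / (real (n - i) + real k) ^ c"

text \<open>Probability that the program P outputs y: the first y flips (numbers 1..y)
  fail independently and flip number y+1 succeeds.\<close>
definition output_prob :: "nat \<Rightarrow> nat \<Rightarrow> nat \<Rightarrow> nat \<Rightarrow> real" where
  "output_prob c k n y =
     (\<Prod>i<y. 1 - flip_succ_prob c k n i) * flip_succ_prob c k n y"

definition prob_small_output :: "nat \<Rightarrow> nat \<Rightarrow> nat \<Rightarrow> real" where
  "prob_small_output c k n = (\<Sum>y\<in>{y::nat. real y < real n / 2}. output_prob c k n y)"

end

theory Submission
  imports Defs
begin

lemma fsp_nonneg: "0 \<le> flip_succ_prob c k n i"
  unfolding flip_succ_prob_def by simp

lemma fsp_le1: assumes "k \<ge> 1" shows "flip_succ_prob c k n i \<le> 1"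
proof -
  have "1 \<le> (real (n - i) + real k) ^ c" using assms by (intro one_le_power) simp
  then show ?thesis unfolding flip_succ_prob_def by simp
qed

lemma op_le: assumes "k \<ge> 1" shows "output_prob c k n y \<le> flip_succ_prob c k n y"
proof -
  have "(\<Prod>i<y. 1 - flip_succ_prob c k n i) \<le> 1"
    by (rule prod_le_1) (use fsp_nonneg fsp_le1[OF assms] in auto)
  then show ?thesis unfolding output_prob_def
    using mult_right_mono[OF _ fsp_nonneg[of c k n y]] by fastforce
qed

lemma op_nonneg: assumes "k \<ge> 1" shows "0 \<le> output_prob c k n y"
  unfolding output_prob_def
  using fsp_nonneg fsp_le1[OF assms]
  by (intro mult_nonneg_nonneg prod_nonneg) (auto simp: algebra_simps)

lemma fsp_small: assumes "k \<ge> 1" "n \<ge> 1" "real y < real n / 2"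
  shows "flip_succ_prob c k n y \<le> 2 ^ c / real n ^ c"
proof -
  have "y < n" using assms by linarith
  hence b: "real n / 2 \<le> real (n - y) + real k" using assms by (simp add: of_nat_diff)
  have "(real n / 2) ^ c \<le> (real (n - y) + real k) ^ c"
    by (rule power_mono[OF b]) simp
  moreover have "0 < (real n / 2) ^ c" using assms by simp
  ultimately have "1 / (real (n - y) + real k) ^ c \<le> 1 / (real n / 2) ^ c"
    by (intro divide_left_mono) auto
  also have "\<dots> = 2 ^ c / real n ^ c" by (simp add: power_divide)
  finally show ?thesis unfolding flip_succ_prob_def .
qed

theorem mainTheorem9:
  fixes c k :: nat
  assumes "c \<ge> 2" and "k \<ge> 2"
  shows "(\<lambda>n. prob_small_output c k n) \<in> O(\<lambda>n. 1 / real n ^ (c - 1))"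
proof (rule bigoI[where c = "2 ^ c"])
  show "\<forall>\<^sub>F n in at_top. norm (prob_small_output c k n) \<le> 2 ^ c * norm (1 / real n ^ (c - 1))"
    unfolding eventually_at_top_linorder
  proof (intro exI allI impI)
    fix n :: nat assume n: "n \<ge> 1"
    have k1: "k \<ge> 1" using assms by simp
    define S where "S = {y::nat. real y < real n / 2}"
    have sub: "S \<subseteq> {..<n}" unfolding S_def by auto
    have fin: "finite S" using sub finite_subset by blast
    have cardS: "card S \<le> n" using card_mono[OF _ sub] by simp
    have nn: "0 \<le> prob_small_output c k n" unfolding prob_small_output_def
      using op_nonneg[OF k1] by (intro sum_nonneg) auto
    have "prob_small_output c k n \<le> (\<Sum>y\<in>S. 2 ^ c / real n ^ c)"
      unfolding prob_small_output_def S_def[symmetric]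
    proof (rule sum_mono)
      fix y assume "y \<in> S"
      then show "output_prob c k n y \<le> 2 ^ c / real n ^ c"
        using op_le[OF k1] fsp_small[OF k1 n] unfolding S_def by (meson mem_Collect_eq order_trans)
    qed
    also have "\<dots> = real (card S) * (2 ^ c / real n ^ c)" by simp
    also have "\<dots> \<le> real n * (2 ^ c / real n ^ c)"
      using cardS by (intro mult_right_mono) auto
    also have "\<dots> = 2 ^ c / real n ^ (c - 1)"
    proof -
      have "real n ^ c = real n * real n ^ (c - 1)"
        using assms by (metis Suc_diff_1 not_numeral_le_zero not_gr0 power_Suc)
      then show ?thesis using n by simp
    qed
    finally show "norm (prob_small_output c k n) \<le> 2 ^ c * norm (1 / real n ^ (c - 1))"
      using nn by simp
  qed
qed

end
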